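(* Let $G$ be a countable infinite discrete group and $\alpha: G\curvearrowright X$ a continuous action on an infinite compact Hausdorff space $X$ with weak paradoxical comparison. Let $F\subset X$ be closed and $O\subset X$ open, and suppose that for every closed $G$-invariant subset $Y\subset X$, $F\cap Y\neq\emptyset$ implies $O\cap Y\neq\emptyset$. Then $F\prec O$.
   Context: Subequivalence: for closed $F$ and open $O$, $F\prec O$ if there exist a finite open cover $\mathcal{U}$ of $F$ and $s_U\in G$ with the sets $s_UU$ pairwise disjoint subsets of $O$. Weak paradoxical comparison: for every closed $F$ and nonempty open $O$ with $F\subset G\cdot O=\bigcup_{g\in G}gO$, one has $F\prec O$. *)

theory Defs
  imports "HOL-Analysis.Analysis" "HOL-Algebra.Group"
begin

definition continuous_action :: "('g, 'b) monoid_scheme \<Rightarrow> ('g \<Rightarrow> 'x::topological_space \<Rightarrow> 'x) \<Rightarrow> bool" where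
  "continuous_action G act \<longleftrightarrow> group G
     \<and> (\<forall>g\<in>carrier G. continuous_on UNIV (act g))
     \<and> act \<one>\<^bsub>G\<^esub> = id
     \<and> (\<forall>g\<in>carrier G. \<forall>h\<in>carrier G. act (g \<otimes>\<^bsub>G\<^esub> h) = act g \<circ> act h)"

definition subequiv :: "('g, 'b) monoid_scheme \<Rightarrow> ('g \<Rightarrow> 'x::topological_space \<Rightarrow> 'x) \<Rightarrow> 'x set \<Rightarrow> 'x set \<Rightarrow> bool" where
  "subequiv G act F V0 \<longleftrightarrow>
     (\<exists>UU s. finite UU \<and> (\<forall>U\<in>UU. open U) \<and> F \<subseteq> \<Union>UU
        \<and> (\<forall>U\<in>UU. s U \<in> carrier G \<and> act (s U) ` U \<subseteq> V0)
        \<and> (\<forall>U\<in>UU. \<forall>V\<in>UU. U \<noteq> V \<longrightarrow> act (s U) ` U \<inter> act (s V) ` V = {}))"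

definition orbit_set :: "('g, 'b) monoid_scheme \<Rightarrow> ('g \<Rightarrow> 'x \<Rightarrow> 'x) \<Rightarrow> 'x set \<Rightarrow> 'x set" where
  "orbit_set G act V0 = (\<Union>g\<in>carrier G. act g ` V0)"

definition weak_paradoxical_comparison :: "('g, 'b) monoid_scheme \<Rightarrow> ('g \<Rightarrow> 'x::topological_space \<Rightarrow> 'x) \<Rightarrow> bool" where
  "weak_paradoxical_comparison G act \<longleftrightarrow>
     (\<forall>F V0. closed F \<and> open V0 \<and> V0 \<noteq> {} \<and> F \<subseteq> orbit_set G act V0 \<longrightarrow> subequiv G act F V0)"

definition invariant_set :: "('g, 'b) monoid_scheme \<Rightarrow> ('g \<Rightarrow> 'x \<Rightarrow> 'x) \<Rightarrow> 'x set \<Rightarrow> bool" where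
  "invariant_set G act Y \<longleftrightarrow> (\<forall>g\<in>carrier G. act g ` Y \<subseteq> Y)"

end

theory Submission
  imports Defs
begin

theorem lemma4p10:
  fixes G :: "('g, 'b) monoid_scheme"
    and act :: "'g \<Rightarrow> 'x::t2_space \<Rightarrow> 'x"
    and F Op :: "'x set"
  assumes "continuous_action G act"
    and "countable (carrier G)" and "infinite (carrier G)"
    and "compact (UNIV :: 'x set)" and "infinite (UNIV :: 'x set)"
    and "weak_paradoxical_comparison G act"
    and "closed F" and "open Op"
    and "\<And>Y. closed Y \<Longrightarrow> invariant_set G act Y \<Longrightarrow> F \<inter> Y \<noteq> {} \<Longrightarrow> Op \<inter> Y \<noteq> {}"
  shows "subequiv G act F Op"
proof -
  have grp: "group G" and cont: "\<And>g. g \<in> carrier G \<Longrightarrow> continuous_on UNIV (act g)"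
    and one: "act \<one>\<^bsub>G\<^esub> = id"
    and mul: "\<And>g h. g \<in> carrier G \<Longrightarrow> h \<in> carrier G \<Longrightarrow> act (g \<otimes>\<^bsub>G\<^esub> h) = act g \<circ> act h"
    using assms(1) unfolding continuous_action_def by auto
  have invl: "act (inv\<^bsub>G\<^esub> g) (act g x) = x" if "g \<in> carrier G" for g x
  proof -
    have "act (inv\<^bsub>G\<^esub> g) (act g x) = act (inv\<^bsub>G\<^esub> g \<otimes>\<^bsub>G\<^esub> g) x"
      using mul[of "inv\<^bsub>G\<^esub> g" g] that grp by (simp add: group.inv_closed)
    also have "\<dots> = x" using that grp one by (simp add: group.l_inv)
    finally show ?thesis .
  qed
  have invr: "act g (act (inv\<^bsub>G\<^esub> g) x) = x" if "g \<in> carrier G" for g x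
  proof -
    have "act g (act (inv\<^bsub>G\<^esub> g) x) = act (g \<otimes>\<^bsub>G\<^esub> inv\<^bsub>G\<^esub> g) x"
      using mul[of g "inv\<^bsub>G\<^esub> g"] that grp by (simp add: group.inv_closed)
    also have "\<dots> = x" using that grp one by (simp add: group.r_inv)
    finally show ?thesis .
  qed
  have img: "act g ` Op = act (inv\<^bsub>G\<^esub> g) -` Op" if "g \<in> carrier G" for g
  proof
    show "act g ` Op \<subseteq> act (inv\<^bsub>G\<^esub> g) -` Op" using invl[OF that] by auto
    show "act (inv\<^bsub>G\<^esub> g) -` Op \<subseteq> act g ` Op"
    proof
      fix x assume "x \<in> act (inv\<^bsub>G\<^esub> g) -` Op"
      then show "x \<in> act g ` Op" using invr[OF that, of x] by (metis image_eqI vimageE)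
    qed
  qed
  have opg: "open (act g ` Op)" if "g \<in> carrier G" for g
  proof -
    have ig: "inv\<^bsub>G\<^esub> g \<in> carrier G" using grp that by (simp add: group.inv_closed)
    have "\<forall>B. open B \<longrightarrow> open (act (inv\<^bsub>G\<^esub> g) -` B \<inter> UNIV)"
      using continuous_on_open_vimage[OF open_UNIV, of "act (inv\<^bsub>G\<^esub> g)"] cont[OF ig] by simp
    hence "open (act (inv\<^bsub>G\<^esub> g) -` Op \<inter> UNIV)" using assms(8) by simp
    then show ?thesis using img[OF that] by simp
  qed
  define W where "W = orbit_set G act Op"
  have "open W" unfolding W_def orbit_set_def using opg by blast
  hence cY: "closed (- W)" by (simp add: closed_Compl)
  have iY: "invariant_set G act (- W)"
    unfolding invariant_set_def
  proof (intro ballI subsetI)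
    fix g y assume g: "g \<in> carrier G" and "y \<in> act g ` (- W)"
    then obtain x where x: "x \<notin> W" "y = act g x" by auto
    show "y \<in> - W"
    proof
      assume "y \<in> W"
      then obtain h z where h: "h \<in> carrier G" "z \<in> Op" "y = act h z"
        unfolding W_def orbit_set_def by auto
      have ig: "inv\<^bsub>G\<^esub> g \<in> carrier G" using grp g by (simp add: group.inv_closed)
      have "x = act (inv\<^bsub>G\<^esub> g) (act h z)" using invl[OF g, of x] x h by simp
      also have "\<dots> = act (inv\<^bsub>G\<^esub> g \<otimes>\<^bsub>G\<^esub> h) z" using mul[OF ig h(1)] by simp
      finally have xe: "x = act (inv\<^bsub>G\<^esub> g \<otimes>\<^bsub>G\<^esub> h) z" .
      have "inv\<^bsub>G\<^esub> g \<otimes>\<^bsub>G\<^esub> h \<in> carrier G"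
        using ig h(1) grp by (simp add: group.is_monoid monoid.m_closed)
      hence "x \<in> W" unfolding W_def orbit_set_def using xe h(2) by blast
      then show False using x by simp
    qed
  qed
  have "Op \<subseteq> W" unfolding W_def orbit_set_def
  proof
    fix x assume "x \<in> Op"
    moreover have "\<one>\<^bsub>G\<^esub> \<in> carrier G" using grp by (simp add: group.is_monoid monoid.one_closed)
    ultimately show "x \<in> (\<Union>g\<in>carrier G. act g ` Op)" using one by force
  qed
  hence "Op \<inter> - W = {}" by auto
  hence FW: "F \<subseteq> W" using assms(9)[OF cY iY] by auto
  show ?thesis
  proof (cases "Op = {}")
    case True
    hence "F = {}" using FW unfolding W_def orbit_set_def by auto
    then show ?thesis unfolding subequiv_def by (intro exI[of _ "{}"]) auto
  next
    case False
    have "\<forall>F V0. closed F \<and> open V0 \<and> V0 \<noteq> {} \<and> F \<subseteq> orbit_set G act V0 \<longrightarrow> subequiv G act F V0"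
      using assms(6) unfolding weak_paradoxical_comparison_def .
    then show ?thesis using assms(7,8) FW False unfolding W_def by blast
  qed
qed

end
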